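(* For every integer $k\ge 0$, every integer $m\ge 2$ and every integer $i$ with $1\le i\le m-1$, $$\tilde d_{i,k}^2(m)\bigl(\tilde d_{i,k}^2(m)-\tilde d_{i-1,k}(m)\tilde d_{i+1,k}(m)\bigr)>\tilde d_{i-1,k}^2(m)\bigl(\tilde d_{i+1,k}^2(m)-\tilde d_{i,k}(m)\tilde d_{i+2,k}(m)\bigr).$$
   Context: For integers $m\ge 0$ and $0\le i\le m$, the Boros–Moll numbers are $$d_i(m)=2^{-2m}\sum_{j=i}^{m}2^j\binom{2m-2j}{m-j}\binom{m+j}{j}\binom{j}{i},$$ with the convention $d_i(m)=0$ for $i>m$. For an integer $k\ge 0$ the normalized Boros–Moll numbers are $\tilde d_{i,k}(m)=d_i(m)/(i+k)!$ for $i\ge 0$ (so $\tilde d_{i,k}(m)=0$ for $i>m$). *)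

theory Defs
  imports Complex_Main
begin

definition boros_moll :: "nat \<Rightarrow> nat \<Rightarrow> real" where
  "boros_moll i m = (if i \<le> m then
     (1 / 2 ^ (2 * m)) * (\<Sum>j = i..m. 2 ^ j * real ((2*m - 2*j) choose (m - j))
        * real ((m + j) choose j) * real (j choose i))
   else 0)"

definition boros_moll_norm :: "nat \<Rightarrow> nat \<Rightarrow> nat \<Rightarrow> real" where
  "boros_moll_norm i k m = boros_moll i m / fact (i + k)"

end

theory Submission
  imports Defs
begin

definition bmc :: "nat \<Rightarrow> nat \<Rightarrow> real" where
  "bmc m j = 2 ^ j * real ((2*m - 2*j) choose (m - j)) * real ((m + j) choose j)"

lemma bm_alt: "boros_moll i m = (1 / 2 ^ (2*m)) * (\<Sum>j = 0..m. bmc m j * real (j choose i))"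
proof (cases "i \<le> m")
  case True
  have "(\<Sum>j = 0..m. bmc m j * real (j choose i)) = (\<Sum>j = i..m. bmc m j * real (j choose i))"
  proof -
    have "{0..m} = {0..<i} \<union> {i..m}" using True by auto
    then have "(\<Sum>j = 0..m. bmc m j * real (j choose i)) = (\<Sum>j \<in> {0..<i} \<union> {i..m}. bmc m j * real (j choose i))"
      by simp
    also have "\<dots> = (\<Sum>j \<in> {0..<i}. bmc m j * real (j choose i)) + (\<Sum>j = i..m. bmc m j * real (j choose i))"
      by (rule sum.union_disjoint) auto
    finally have "(\<Sum>j = 0..m. bmc m j * real (j choose i)) = (\<Sum>j \<in> {0..<i}. bmc m j * real (j choose i)) + (\<Sum>j = i..m. bmc m j * real (j choose i))" .
    moreover have "(\<Sum>j \<in> {0..<i}. bmc m j * real (j choose i)) = 0"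
      by (intro sum.neutral) auto
    ultimately show ?thesis by simp
  qed
  then show ?thesis using True by (simp add: boros_moll_def bmc_def mult.assoc)
next
  case False
  have "(\<Sum>j = 0..m. bmc m j * real (j choose i)) = 0"
    using False by (intro sum.neutral) auto
  then show ?thesis using False by (simp add: boros_moll_def)
qed

lemma binom_step_real: "real (Suc k) * real (n choose Suc k) = (real n - real k) * real (n choose k)"
proof (cases "k \<le> n")
  case True
  have "Suc k * (n choose Suc k) = (n - k) * (n choose k)"
    using binomial_absorption[of k n] binomial_absorb_comp[of n k] by simp
  then have "real (Suc k * (n choose Suc k)) = real ((n - k) * (n choose k))" by simp
  then show ?thesis using True by (simp add: of_nat_diff algebra_simps)
next
  case False
  then show ?thesis by (simp add: binomial_eq_0)
qed

lemma central_step: "n * ((2*n) choose n) = 2 * (2*n - 1) * ((2*n - 2) choose (n - 1))" if "n \<ge> 1" for n :: nat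
proof -
  define k where "k = n - 1"
  have n: "n = Suc k" using that k_def by simp
  have e1: "Suc k * (Suc (Suc (2*k)) choose Suc k) = Suc (Suc (2*k)) * (Suc (2*k) choose k)"
    by (rule Suc_times_binomial)
  have e2: "Suc k * (Suc (2*k) choose k) = Suc k * (Suc (2*k) choose Suc k)"
    using binomial_symmetric[of k "Suc (2*k)"] by simp
  have e3: "Suc k * (Suc (2*k) choose Suc k) = Suc (2*k) * (2*k choose k)"
    by (rule Suc_times_binomial)
  have "Suc k * (Suc k * (Suc (Suc (2*k)) choose Suc k)) = Suc k * (2 * (Suc (2*k) * (2*k choose k)))"
  proof -
    have "Suc k * (Suc k * (Suc (Suc (2*k)) choose Suc k)) = Suc (Suc (2*k)) * (Suc k * (Suc (2*k) choose k))"
      using e1 by (metis mult.left_commute)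
    also have "\<dots> = Suc (Suc (2*k)) * (Suc (2*k) * (2*k choose k))" using e2 e3 by metis
    also have "\<dots> = Suc k * (2 * (Suc (2*k) * (2*k choose k)))" by (simp del: binomial_Suc_Suc)
    finally show ?thesis .
  qed
  then have "Suc k * (Suc (Suc (2*k)) choose Suc k) = 2 * (Suc (2*k) * (2*k choose k))"
    using mult_left_cancel[of "Suc k"] by (metis nat.distinct(1))
  moreover have "2 * n = Suc (Suc (2*k))" "2*n - 1 = Suc (2*k)" "2*n - 2 = 2*k" "n - 1 = k" using n by auto
  ultimately show ?thesis using n by (simp del: binomial_Suc_Suc add: mult.assoc)
qed

lemma bmc_rel:
  assumes "j < m"
  shows "real (Suc j) * (2 * real m - 2 * real j - 1) * bmc m (Suc j) = (real m - real j) * (real m + real j + 1) * bmc m j"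
proof -
  define n where "n = m - j"
  have n1: "n \<ge> 1" using assms n_def by simp
  have a1: "2*m - 2*j = 2*n" using assms n_def by simp
  have a2: "2*m - 2*Suc j = 2*n - 2" using assms n_def by simp
  have a3: "m - Suc j = n - 1" using assms n_def by simp
  have c: "real n * real ((2*n) choose n) = 2 * (2 * real n - 1) * real ((2*n - 2) choose (n - 1))"
  proof -
    have "real (n * ((2*n) choose n)) = real (2 * (2*n - 1) * ((2*n - 2) choose (n - 1)))"
      using central_step[OF n1] by simp
    then show ?thesis using n1 by (simp add: of_nat_diff)
  qed
  have d: "real (Suc j) * real ((m + Suc j) choose Suc j) = (real m + real j + 1) * real ((m + j) choose j)"
  proof -
    have "real (Suc j) * real (Suc (m + j) choose Suc j) = real (Suc (m + j)) * real ((m + j) choose j)"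
      by (metis of_nat_mult Suc_times_binomial)
    then show ?thesis by (simp add: algebra_simps)
  qed
  have rn: "real n = real m - real j" using assms n_def by (simp add: of_nat_diff)
  have "real (Suc j) * (2 * real m - 2 * real j - 1) * bmc m (Suc j)
      = 2 ^ j * ((2 * (2 * real n - 1) * real ((2*n - 2) choose (n - 1))) * (real (Suc j) * real ((m + Suc j) choose Suc j)))"
    unfolding bmc_def a2 a3 rn by (simp add: algebra_simps)
  also have "\<dots> = 2 ^ j * ((real n * real ((2*n) choose n)) * ((real m + real j + 1) * real ((m + j) choose j)))"
    using c d by simp
  also have "\<dots> = (real m - real j) * (real m + real j + 1) * bmc m j"
    unfolding bmc_def a1 n_def[symmetric] rn by (simp add: algebra_simps)
  finally show ?thesis .
qed

lemma T_ident:
  assumes "1 \<le> i"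
  shows "real i * real (i+1) * real (j choose (i+1)) - real i * (2*real m+1) * real (j choose i)
       + (real m + 1 - real i) * (real m + real i) * real (j choose (i-1))
     = (real m - real j) * (real m + real j + 1) * real (j choose (i-1))
       - real i * (2*real m + 1 - 2*real j) * real (j choose i)"
proof -
  have E1: "real (Suc i) * real (j choose Suc i) = (real j - real i) * real (j choose i)"
    by (rule binom_step_real)
  have E2: "real (Suc (i-1)) * real (j choose Suc (i-1)) = (real j - real (i-1)) * real (j choose (i-1))"
    by (rule binom_step_real)
  have si: "Suc (i-1) = i" using assms by simp
  have ri: "real (i-1) = real i - 1" using assms by (simp add: of_nat_diff)
  have E2': "real i * real (j choose i) = (real j - real i + 1) * real (j choose (i-1))"
    using E2 unfolding si ri by simp
  show ?thesis using E1 E2' by simp algebra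
qed

lemma scale_eq:
  fixes X Y Z S1 S0 Sm c :: real
  assumes "X*S1 = Y*S0 - Z*Sm" shows "X*(c*S1) = Y*(c*S0) - Z*(c*Sm)"
proof -
  have "X*(c*S1) = c*(X*S1)" by simp
  also have "\<dots> = c*(Y*S0 - Z*Sm)" using assms by simp
  also have "\<dots> = Y*(c*S0) - Z*(c*Sm)" by (simp add: algebra_simps)
  finally show ?thesis .
qed

lemma bm_rec:
  assumes "1 \<le> i" "i \<le> m"
  shows "real i * real (i+1) * boros_moll (i+1) m
       = real i * (2*real m+1) * boros_moll i m - (real m + 1 - real i) * (real m + real i) * boros_moll (i-1) m"
proof -
  define T where "T j = real i * real (i+1) * real (j choose (i+1)) - real i * (2*real m+1) * real (j choose i)
       + (real m + 1 - real i) * (real m + real i) * real (j choose (i-1))" for j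
  define G where "G j = real i * bmc m j * real (j choose i) * (2*real m + 1 - 2*real j)" for j
  have Tj: "T j = (real m - real j) * (real m + real j + 1) * real (j choose (i-1))
       - real i * (2*real m + 1 - 2*real j) * real (j choose i)" for j
    unfolding T_def using T_ident[OF assms(1), of j m] by simp
  have step: "bmc m j * T j = G (Suc j) - G j" if "j < m" for j
  proof -
    have b: "real i * real (Suc j choose i) = real (Suc j) * real (j choose (i-1))"
    proof -
      have "Suc (i-1) * (Suc j choose Suc (i-1)) = Suc j * (j choose (i-1))" by (rule Suc_times_binomial)
      then have "real (Suc (i-1)) * real (Suc j choose Suc (i-1)) = real (Suc j) * real (j choose (i-1))"
        by (metis of_nat_mult)
      moreover have "Suc (i-1) = i" using assms by simp
      ultimately show ?thesis by simp
    qed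
    have r: "real (Suc j) * (2 * real m - 2 * real j - 1) * bmc m (Suc j) = (real m - real j) * (real m + real j + 1) * bmc m j"
      by (rule bmc_rel[OF that])
    have "bmc m j * T j = (real m - real j) * (real m + real j + 1) * bmc m j * real (j choose (i-1))
          - G j"
      unfolding Tj G_def by (simp add: algebra_simps)
    also have "(real m - real j) * (real m + real j + 1) * bmc m j * real (j choose (i-1))
          = (2 * real m - 2 * real j - 1) * bmc m (Suc j) * (real (Suc j) * real (j choose (i-1)))"
    proof -
      have e: "(real m - real j) * (real m + real j + 1) * bmc m j = real (Suc j) * (2 * real m - 2 * real j - 1) * bmc m (Suc j)"
        using r by simp
      show ?thesis by (subst e) (simp only: mult_ac)
    qed
    also have "\<dots> = G (Suc j)" unfolding G_def by (subst b[symmetric]) (simp add: algebra_simps)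
    finally show ?thesis .
  qed
  have last: "bmc m m * T m = - G m"
    unfolding Tj G_def by (simp add: algebra_simps)
  have "(\<Sum>j = 0..m. bmc m j * T j) = (\<Sum>j<m. bmc m j * T j) + bmc m m * T m"
    by (simp add: atLeast0AtMost lessThan_Suc_atMost[symmetric])
  also have "(\<Sum>j<m. bmc m j * T j) = (\<Sum>j<m. G (Suc j) - G j)"
    using step by (intro sum.cong) auto
  also have "\<dots> = G m - G 0" by (rule sum_lessThan_telescope)
  finally have S0: "(\<Sum>j = 0..m. bmc m j * T j) = 0"
    using last assms by (simp add: G_def)
  have "(\<Sum>j = 0..m. bmc m j * T j) =
        real i * real (i+1) * (\<Sum>j = 0..m. bmc m j * real (j choose (i+1)))
      - real i * (2*real m+1) * (\<Sum>j = 0..m. bmc m j * real (j choose i))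
      + (real m + 1 - real i) * (real m + real i) * (\<Sum>j = 0..m. bmc m j * real (j choose (i-1)))"
    unfolding T_def by (simp add: sum_distrib_left sum.distrib sum_subtractf algebra_simps)
  with S0 have key: "real i * real (i+1) * (\<Sum>j = 0..m. bmc m j * real (j choose (i+1)))
      = real i * (2*real m+1) * (\<Sum>j = 0..m. bmc m j * real (j choose i))
      - (real m + 1 - real i) * (real m + real i) * (\<Sum>j = 0..m. bmc m j * real (j choose (i-1)))"
    by linarith
  then show ?thesis unfolding bm_alt by (rule scale_eq)
qed

lemma bmc_nonneg: "0 \<le> bmc m j" unfolding bmc_def by simp

lemma bm_nonneg: "0 \<le> boros_moll i m"
  unfolding bm_alt by (intro mult_nonneg_nonneg sum_nonneg) (auto simp: bmc_nonneg)

lemma bm_pos: assumes "i \<le> m" shows "0 < boros_moll i m"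
proof -
  have "0 < bmc m m * real (m choose i)" unfolding bmc_def using assms by simp
  also have "\<dots> \<le> (\<Sum>j = 0..m. bmc m j * real (j choose i))"
    by (rule member_le_sum) (auto simp: bmc_nonneg)
  finally show ?thesis unfolding bm_alt by simp
qed

lemma bm_zero: "m < i \<Longrightarrow> boros_moll i m = 0"
  unfolding boros_moll_def by simp

definition Rb :: "nat \<Rightarrow> nat \<Rightarrow> real" where
  "Rb m j = real m + 3/2 - real j - (real m + 3/4) / (2 * real j - 1)"

lemma subsol:
  assumes "1 \<le> j" "j \<le> m"
  shows "Rb m j * (2 * real m + 1 - Rb m (j+1)) \<le> (real m + 1 - real j) * (real m + real j)"
proof -
  define x where "x = real j"
  define y where "y = real m"
  have x1: "x \<ge> 1" using assms x_def by simp
  have xy: "x \<le> y" using assms x_def y_def by simp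
  have d1: "2*x - 1 > 0" using x1 by simp
  have d2: "2*x + 1 > 0" using x1 by simp
  have n1: "2*x - 1 \<noteq> 0" "2*x + 1 \<noteq> 0" using d1 d2 by auto
  define u where "u = (y + 3/4) / (2*x - 1)"
  define v where "v = (y + 3/4) / (2*x + 1)"
  have hu: "u * (2*x - 1) = y + 3/4" unfolding u_def using n1 by simp
  have hv: "v * (2*x + 1) = y + 3/4" unfolding v_def using n1 by simp
  define E where "E = 16*(x-1)^2 + 104*(x-1) + 133 + 64*(x-1)*(y-x) + 160*(y-x) + 48*(y-x)^2"
  have key: "((y + 1 - x) * (y + x) - (y + 3/2 - x - u) * (2*y + 1 - (y + 3/2 - (x+1) - v))) * (16 * (2*x - 1) * (2*x+1)) = E"
    unfolding E_def using hu hv by algebra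
  have pd: "16 * (2*x - 1) * (2*x+1) \<noteq> 0" using n1 by simp
  have eq: "(y + 1 - x) * (y + x) - (y + 3/2 - x - u) * (2*y + 1 - (y + 3/2 - (x+1) - v))
     = E / (16 * (2*x - 1) * (2*x+1))"
    using key pd by (simp add: eq_divide_eq)
  have r1: "Rb m (j+1) = y + 3/2 - (x+1) - v"
    unfolding Rb_def x_def y_def v_def by (simp add: algebra_simps)
  have "0 \<le> E"
    unfolding E_def using x1 xy by (intro add_nonneg_nonneg mult_nonneg_nonneg) auto
  then have "0 \<le> E / (16 * (2*x - 1) * (2*x+1))"
    using d1 d2 by simp
  moreover have "Rb m j = y + 3/2 - x - u" unfolding Rb_def x_def y_def u_def by simp
  ultimately show ?thesis using eq r1 by (simp add: x_def y_def)
qed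

lemma Rb_top: "Rb m (m+1) < 0"
proof -
  have "(real m + 3/4) / (2 * real (m+1) - 1) > 1/2"
    by (simp add: field_simps)
  then show ?thesis unfolding Rb_def by simp
qed

lemma lower_bound:
  assumes "1 \<le> j" "j \<le> m+1"
  shows "Rb m j * boros_moll (j-1) m \<le> real j * boros_moll j m"
proof -
  have "\<forall>j. 1 \<le> j \<longrightarrow> j \<le> m+1 \<longrightarrow> m+1-j = n \<longrightarrow> Rb m j * boros_moll (j-1) m \<le> real j * boros_moll j m" for n
  proof (induction n)
    case 0
    show ?case
    proof (intro allI impI)
      fix j assume h: "1 \<le> j" "j \<le> m+1" "m+1-j = 0"
      then have jm: "j = m+1" by simp
      have "Rb m (m+1) \<le> 0" using Rb_top[of m] by simp
      then have "Rb m j * boros_moll (j-1) m \<le> 0"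
        using mult_nonpos_nonneg[OF _ bm_nonneg[of "j-1" m]] jm by simp
      moreover have "boros_moll j m = 0" using jm bm_zero[of m j] by simp
      ultimately show "Rb m j * boros_moll (j-1) m \<le> real j * boros_moll j m"
        by simp
    qed
  next
    case (Suc n)
    show ?case
    proof (intro allI impI)
      fix j assume h: "1 \<le> j" "j \<le> m+1" "m+1-j = Suc n"
      then have jm: "j \<le> m" by simp
      have IH: "Rb m (j+1) * boros_moll j m \<le> real (j+1) * boros_moll (j+1) m"
      proof -
        have "m + 1 - (j+1) = n" using h(3) by simp
        moreover have "1 \<le> j+1" "j+1 \<le> m+1" using jm by auto
        ultimately have "Rb m (j+1) * boros_moll (j+1-1) m \<le> real (j+1) * boros_moll (j+1) m"
          using Suc.IH by blast
        then show ?thesis by simp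
      qed
      have rec: "real j * real (j+1) * boros_moll (j+1) m
          = real j * (2*real m+1) * boros_moll j m - (real m + 1 - real j) * (real m + real j) * boros_moll (j-1) m"
        using bm_rec[OF h(1) jm] .
      define P where "P = (real m + 1 - real j) * (real m + real j)"
      have Ppos: "P > 0" unfolding P_def using jm h(1) by (intro mult_pos_pos) auto
      have A: "P * boros_moll (j-1) m \<le> real j * (2 * real m + 1 - Rb m (j+1)) * boros_moll j m"
      proof -
        have "P * boros_moll (j-1) m = real j * (2*real m+1) * boros_moll j m - real j * (real (j+1) * boros_moll (j+1) m)"
          using rec unfolding P_def by (simp add: algebra_simps)
        also have "\<dots> \<le> real j * (2*real m+1) * boros_moll j m - real j * (Rb m (j+1) * boros_moll j m)"
          using IH h(1) by (intro diff_left_mono mult_left_mono) auto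
        finally show ?thesis by (simp add: algebra_simps)
      qed
      show "Rb m j * boros_moll (j-1) m \<le> real j * boros_moll j m"
      proof (cases "Rb m j \<le> 0")
        case True
        then have "Rb m j * boros_moll (j-1) m \<le> 0" using bm_nonneg by (simp add: mult_nonpos_nonneg)
        moreover have "0 \<le> real j * boros_moll j m" using bm_nonneg by simp
        ultimately show ?thesis by linarith
      next
        case False
        have S: "Rb m j * (2 * real m + 1 - Rb m (j+1)) \<le> P" unfolding P_def by (rule subsol[OF h(1) jm])
        have "P * (Rb m j * boros_moll (j-1) m) = Rb m j * (P * boros_moll (j-1) m)" by simp
        also have "\<dots> \<le> Rb m j * (real j * (2 * real m + 1 - Rb m (j+1)) * boros_moll j m)"
          using A False by (intro mult_left_mono) auto
        also have "\<dots> = (Rb m j * (2 * real m + 1 - Rb m (j+1))) * (real j * boros_moll j m)" by simp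
        also have "\<dots> \<le> P * (real j * boros_moll j m)"
          using S bm_nonneg[of j m] by (intro mult_right_mono) auto
        finally show ?thesis using Ppos by simp
      qed
    qed
  qed
  then show ?thesis using assms by blast
qed


lemma upper_bound:
  assumes "1 \<le> j" "j \<le> m+1"
  shows "real j * boros_moll j m \<le> (real m + 1 - real j) * boros_moll (j-1) m"
proof -
  have "\<forall>j. 1 \<le> j \<longrightarrow> j \<le> m+1 \<longrightarrow> m+1-j = n \<longrightarrow> real j * boros_moll j m \<le> (real m + 1 - real j) * boros_moll (j-1) m" for n
  proof (induction n)
    case 0
    show ?case
    proof (intro allI impI)
      fix j assume h: "1 \<le> j" "j \<le> m+1" "m+1-j = 0"
      then have jm: "j = m+1" by simp
      have "boros_moll j m = 0" using jm bm_zero[of m j] by simp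
      then show "real j * boros_moll j m \<le> (real m + 1 - real j) * boros_moll (j-1) m"
        using jm by simp
    qed
  next
    case (Suc n)
    show ?case
    proof (intro allI impI)
      fix j assume h: "1 \<le> j" "j \<le> m+1" "m+1-j = Suc n"
      then have jm: "j \<le> m" by simp
      have IH: "real (j+1) * boros_moll (j+1) m \<le> (real m - real j) * boros_moll j m"
      proof -
        have "m + 1 - (j+1) = n" using h(3) by simp
        moreover have "1 \<le> j+1" "j+1 \<le> m+1" using jm by auto
        ultimately have "real (j+1) * boros_moll (j+1) m \<le> (real m + 1 - real (j+1)) * boros_moll (j+1-1) m"
          using Suc.IH by blast
        then show ?thesis by simp
      qed
      have rec: "real j * real (j+1) * boros_moll (j+1) m
          = real j * (2*real m+1) * boros_moll j m - (real m + 1 - real j) * (real m + real j) * boros_moll (j-1) m"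
        using bm_rec[OF h(1) jm] .
      have A: "real j * (real m + real j + 1) * boros_moll j m \<le> (real m + 1 - real j) * (real m + real j) * boros_moll (j-1) m"
      proof -
        have e: "(real m + 1 - real j) * (real m + real j) * boros_moll (j-1) m = real j * (2*real m+1) * boros_moll j m - real j * (real (j+1) * boros_moll (j+1) m)"
          using rec by (simp add: algebra_simps)
        have "real j * (real (j+1) * boros_moll (j+1) m) \<le> real j * ((real m - real j) * boros_moll j m)"
          using IH by (intro mult_left_mono) auto
        then show ?thesis unfolding e by (simp add: algebra_simps)
      qed
      have B: "(real m + 1 - real j) * (real m + real j) * boros_moll (j-1) m \<le> (real m + 1 - real j) * (real m + real j + 1) * boros_moll (j-1) m"
        using jm bm_nonneg[of "j-1" m] by (intro mult_right_mono mult_left_mono) auto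
      have "(real m + real j + 1) * (real j * boros_moll j m) \<le> (real m + real j + 1) * ((real m + 1 - real j) * boros_moll (j-1) m)"
        using A B by (simp add: algebra_simps)
      then show "real j * boros_moll j m \<le> (real m + 1 - real j) * boros_moll (j-1) m"
        by (rule mult_left_le_imp_le) simp
    qed
  qed
  then show ?thesis using assms by blast
qed

definition Mh :: "real \<Rightarrow> real \<Rightarrow> real \<Rightarrow> real \<Rightarrow> real \<Rightarrow> real" where
  "Mh a p k wn den = (let i = 1 + a; m = i + 1 + p; K = i + k; Q0 = (m+1-i)*(m+i); Q1 = (m-i)*(m+i+1) in
     (Q0^2*(i+1)^2*(K+1)^2*(i+2)*(K+2))*den^4 - Q0*wn*((2*m+1)*den-wn)*i*K*(i+1)*(K+1)*(i+2)*(K+2)*den^2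
     + ((2*m+1)*den-wn)^2*i^2*K^2*(- (wn^2*(i+2)*(K+2)) + ((2*m+1)*wn*den-Q1*den^2)*(i+1)*(K+1)))"

definition q0 :: "real \<Rightarrow> real \<Rightarrow> real \<Rightarrow> real" where
  "q0 a p k = 92964255 + 114898827*k + 147424272*p + 600727798*a + 45595833*k^2 + 177663744*p*k + 87134400*p^2 + 684704253*a*k + 901568896*a*p + 1760702717*a^2 + 5745357*k^3 + 68521104*p*k^2 + 102712896*p^2*k + 22780416*p^3 + 249102204*a*k^2 + 993124280*a*p*k + 499970304*a*p^2 + 1833579558*a^2*k + 2489892888*a^2*p + 3090859812*a^3 + 8421792*p*k^3 + 38697984*p^2*k^2 + 26384640*p^3*k + 2224128*p^4 + 28631029*a*k^3 + 347073904*a*p*k^2 + 533299008*a*p^2*k + 121498112*a*p^3 + 604946142*a^2*k^2 + 2479978592*a^2*p*k + 1286286528*a^2*p^2 + 2907893538*a^3*k + 4096353264*a^3*p + 3613190521*a^4 + 4705920*p^2*k^3 + 9767424*p^3*k^2 + 2543616*p^4*k + 38341752*a*p*k^3 + 179731104*a*p^2*k^2 + 125954688*a*p^3*k + 10907648*a*p^4 + 62594339*a^2*k^3 + 775065432*a^2*p*k^2 + 1225118496*a^2*p^2*k + 287436928*a^2*p^3 + 858385068*a^3*k^2 + 3640449824*a^3*p*k + 1953579648*a^3*p^2 + 3028214767*a^4*k + 4457006880*a^4*p + 2956488934*a^5 + 1186560*p^3*k^3 + 930816*p^4*k^2 + 19378848*a*p^2*k^3 + 41132544*a*p^3*k^2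 + 11032576*a*p^4*k + 75656320*a^2*p*k^3 + 363237984*a^2*p^2*k^2 + 262291200*a^2*p^3*k + 23359488*a^2*p^4 + 78627243*a^3*k^3 + 1000813872*a^3*p*k^2 + 1634003840*a^3*p^2*k + 395877120*a^3*p^3 + 786136257*a^4*k^2 + 3475601904*a^4*p*k + 1939305792*a^4*p^2 + 2168215761*a^5*k + 3363888960*a^5*p + 1731096507*a^6 + 113664*p^4*k^3 + 4369280*a*p^3*k^3 + 3507200*a*p^4*k^2 + 33969312*a^2*p^2*k^3 + 73945728*a^2*p^3*k^2 + 20445184*a^2*p^4*k + 84421944*a^3*p*k^3 + 417202624*a^3*p^2*k^2 + 311186432*a^3*p^3*k + 28523520*a^3*p^4 + 62352128*a^4*k^3 + 822658536*a^4*p*k^2 + 1394099040*a^4*p^2*k + 349782784*a^4*p^3 + 483872544*a^5*k^2 + 2252239784*a^5*p*k + 1314483136*a^5*p^2 + 1085017920*a^6*k + 1794540280*a^6*p + 727796768*a^7 + 368640*a*p^4*k^3 + 6670336*a^2*p^3*k^3 + 5482752*a^2*p^4*k^2 + 32849600*a^3*p^2*k^3 + 73583872*a^3*p^3*k^2 + 20974080*a^3*p^4*k + 58177552*a^4*p*k^3 + 297825728*a^4*p^2*k^2 + 230056192*a^4*p^3*k + 21711104*a^4*p^4 + 32236624*a^5*k^3 + 445761712*a^5*p*k^2 + 788843200*a^5*p^2*k + 205600768*a^5*p^3 + 201710832*a^6*k^2 + 1001584304*a^6*p*k + 615939008*a^6*p^2 + 377410544*a^7*k + 675380752*a^7*p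 + 216763216*a^8 + 475904*a^2*p^4*k^3 + 5405312*a^3*p^3*k^3 + 4550656*a^3*p^4*k^2 + 18920768*a^4*p^2*k^3 + 43790208*a^4*p^3*k^2 + 12856064*a^4*p^4*k + 25296640*a^5*p*k^3 + 135290560*a^5*p^2*k^2 + 108528512*a^5*p^3*k + 10542592*a^5*p^4 + 10801152*a^6*k^3 + 158888192*a^6*p*k^2 + 295963072*a^6*p^2*k + 80391808*a^6*p^3 + 55823104*a^7*k^2 + 301132032*a^7*p*k + 196958272*a^7*p^2 + 88692224*a^8*k + 175265536*a^8*p + 44202752*a^9 + 305408*a^3*p^4*k^3 + 2453248*a^4*p^3*k^3 + 2114304*a^4*p^4*k^2 + 6488320*a^5*p^2*k^3 + 15592704*a^5*p^3*k^2 + 4705024*a^5*p^4*k + 6753920*a^6*p*k^3 + 38181632*a^6*p^2*k^2 + 31909120*a^6*p^3*k + 3186944*a^6*p^4 + 2241792*a^7*k^3 + 35812224*a^7*p*k^2 + 70978304*a^7*p^2*k + 20162304*a^7*p^3 + 9703168*a^8*k^2 + 58385280*a^8*p*k + 41120000*a^8*p^2 + 13233920*a^9*k + 29752960*a^9*p + 5772544*a^10 + 97280*a^4*p^4*k^3 + 591872*a^5*p^3*k^3 + 521216*a^5*p^4*k^2 + 1225728*a^6*p^2*k^3 + 3078144*a^6*p^3*k^2 + 951296*a^6*p^4*k + 1006592*a^7*p*k^3 + 6118400*a^7*p^2*k^2 + 5347328*a^7*p^3*k + 547840*a^7*p^4 + 258048*a^8*k^3 + 4609024*a^8*p*k^2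 + 9870336*a^8*p^2*k + 2942976*a^8*p^3 + 937984*a^9*k^2 + 6558720*a^9*p*k + 5059584*a^9*p^2 + 1101824*a^10*k + 2956288*a^10*p + 421888*a^11 + 12288*a^5*p^4*k^3 + 59392*a^6*p^3*k^3 + 53248*a^6*p^4*k^2 + 98304*a^7*p^2*k^3 + 260096*a^7*p^3*k^2 + 81920*a^7*p^4*k + 63488*a^8*p*k^3 + 425984*a^8*p^2*k^2 + 391168*a^8*p^3*k + 40960*a^8*p^4 + 12288*a^9*k^3 + 256000*a^9*p*k^2 + 606208*a^9*p^2*k + 190464*a^9*p^3 + 36864*a^10*k^2 + 321536*a^10*p*k + 278528*a^10*p^2 + 36864*a^11*k + 129024*a^11*p + 12288*a^12"

definition q1 :: "real \<Rightarrow> real \<Rightarrow> real \<Rightarrow> real" where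
  "q1 a p k = 366868680 + 452149728*k + 579650496*p + 2372605792*a + 180072552*k^2 + 694776912*p*k + 341613504*p^2 + 2701732252*a*k + 3545149024*a*p + 6963917148*a^2 + 23127888*k^3 + 268158432*p*k^2 + 399354624*p^2*k + 89250816*p^3 + 988871816*a*k^2 + 3890954392*a*p*k + 1958575104*a*p^2 + 7261283832*a^2*k + 9796845176*a^2*p + 12252505648*a^3 + 33592656*p*k^3 + 149905728*p^2*k^2 + 102326016*p^3*k + 8730624*p^4 + 116151116*a*k^3 + 1364321456*a*p*k^2 + 2074365216*a*p^2*k + 475515392*a*p^3 + 2417306908*a^2*k^2 + 9743256608*a^2*p*k + 5036003232*a^2*p^2 + 11572041392*a^3*k + 16139870096*a^3*p + 14371829344*a^4 + 18510336*p^2*k^3 + 37593600*p^3*k^2 + 9882624*p^4*k + 154118648*a*p*k^3 + 697788288*a*p^2*k^2 + 488417408*a*p^3*k + 42801152*a*p^4 + 256419976*a^2*k^3 + 3065298440*a^2*p*k^2 + 4769314752*a^2*p^2*k + 1123979904*a^2*p^3 + 3459211392*a^3*k^2 + 14361116608*a^3*p*k + 7646380608*a^3*p^2 + 12131105768*a^4*k + 17604737808*a^4*p + 11819158896*a^5 + 4611840*p^3*k^3 + 3581952*p^4*k^2 + 76568544*a*p^2*k^3 + 158478592*a*p^3*k^2 + 42900992*a*p^4*k + 307290416*a^2*p*k^3 + 1414616928*a^2*p^2*k^2 + 1017220608*a^2*p^3*k + 91674112*a^2*p^4 + 326166012*a^3*k^3 + 3991811344*a^3*p*k^2 + 6369821056*a^3*p^2*k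 + 1546920704*a^3*p^3 + 3203637108*a^4*k^2 + 13794982976*a^4*p*k + 7591258752*a^4*p^2 + 8766209284*a^5*k + 13343672928*a^5*p + 6972329868*a^6 + 439296*p^4*k^3 + 17013376*a*p^3*k^3 + 13527040*a*p^4*k^2 + 135011520*a^2*p^2*k^3 + 285339008*a^2*p^3*k^2 + 79633408*a^2*p^4*k + 347984568*a^3*p*k^3 + 1631674304*a^3*p^2*k^2 + 1207258112*a^3*p^3*k + 112024576*a^3*p^4 + 262992512*a^4*k^3 + 3321772008*a^4*p*k^2 + 5446300800*a^4*p^2*k + 1366018816*a^4*p^3 + 2001947936*a^5*k^2 + 9024035048*a^5*p*k + 5148903552*a^5*p^2 + 4444477120*a^6*k + 7169711032*a^6*p + 2964385312*a^7 + 1427968*a*p^4*k^3 + 26030336*a^2*p^3*k^3 + 21223936*a^2*p^4*k^2 + 131622688*a^3*p^2*k^3 + 284476160*a^3*p^3*k^2 + 81905664*a^3*p^4*k + 245176688*a^4*p*k^3 + 1171760992*a^4*p^2*k^2 + 892953600*a^4*p^3*k + 85397504*a^4*p^4 + 139104016*a^5*k^3 + 1834015696*a^5*p*k^2 + 3092343136*a^5*p^2*k + 802552320*a^5*p^3 + 852460848*a^6*k^2 + 4074418768*a^6*p*k + 2416644384*a^6*p^2 + 1575803696*a^7*k + 2731790320*a^7*p + 898184464*a^8 + 1850368*a^2*p^4*k^3 + 21145216*a^3*p^3*k^3 + 17708032*a^3*p^4*k^2 + 76730176*a^4*p^2*k^3 + 169639808*a^4*p^3*k^2 + 50393088*a^4*p^4*k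 + 110497856*a^5*p*k^3 + 537130432*a^5*p^2*k^2 + 421482368*a^5*p^3*k + 41568256*a^5*p^4 + 48140288*a^6*k^3 + 674148544*a^6*p*k^2 + 1166976448*a^6*p^2*k + 313661056*a^6*p^3 + 243344896*a^7*k^2 + 1257219264*a^7*p*k + 775489344*a^7*p^2 + 381234176*a^8*k + 724771904*a^8*p + 188200448*a^9 + 1194496*a^3*p^4*k^3 + 9620736*a^4*p^3*k^3 + 8285696*a^4*p^4*k^2 + 26849024*a^5*p^2*k^3 + 60522240*a^5*p^3*k^2 + 18537984*a^5*p^4*k + 31449344*a^6*p*k^3 + 153974016*a^6*p^2*k^2 + 123979520*a^6*p^3*k + 12610048*a^6*p^4 + 10480128*a^7*k^3 + 160613120*a^7*p*k^2 + 282961152*a^7*p^2*k + 78624000*a^7*p^3 + 44355072*a^8*k^2 + 255851264*a^8*p*k + 163143424*a^8*p^2 + 59584000*a^9*k + 128424192*a^9*p + 25709056*a^10 + 384000*a^4*p^4*k^3 + 2325504*a^5*p^3*k^3 + 2061312*a^5*p^4*k^2 + 5285888*a^6*p^2*k^3 + 11965440*a^6*p^3*k^2 + 3773440*a^6*p^4*k + 5344256*a^7*p*k^3 + 25495552*a^7*p^2*k^2 + 20780032*a^7*p^3*k + 2178048*a^7*p^4 + 1298432*a^8*k^3 + 23192576*a^8*p*k^2 + 40335360*a^8*p^2*k + 11467776*a^8*p^3 + 4632576*a^9*k^2 + 31876096*a^9*p*k + 20453376*a^9*p^2 + 5369856*a^10*k + 14027776*a^10*p + 2035712*a^11 + 49152*a^5*p^4*k^3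 + 233472*a^6*p^3*k^3 + 212992*a^6*p^4*k^2 + 479232*a^7*p^2*k^3 + 1011712*a^7*p^3*k^2 + 327680*a^7*p^4*k + 477184*a^8*p*k^3 + 1961984*a^8*p^2*k^2 + 1519616*a^8*p^3*k + 163840*a^8*p^4 + 69632*a^9*k^3 + 1759232*a^9*p*k^2 + 2682880*a^9*p^2*k + 741376*a^9*p^3 + 208896*a^10*k^2 + 2086912*a^10*p*k + 1200128*a^10*p^2 + 208896*a^11*k + 804864*a^11*p + 69632*a^12 + 8192*a^8*p^2*k^3 + 16384*a^9*p*k^3 + 24576*a^9*p^2*k^2 + 49152*a^10*p*k^2 + 24576*a^10*p^2*k + 49152*a^11*p*k + 8192*a^11*p^2 + 16384*a^12*p"

definition q2 :: "real \<Rightarrow> real \<Rightarrow> real \<Rightarrow> real" where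
  "q2 a p k = 542637360 + 666131472*k + 854382816*p + 3511166688*a + 265601808*k^2 + 1017099072*p*k + 502449696*p^2 + 3989729088*a*k + 5223531456*a*p + 10317633792*a^2 + 34612272*k^3 + 391550112*p*k^2 + 581721696*p^2*k + 131404032*p^3 + 1465854624*a*k^2 + 5702947056*a*p*k + 2876784192*a*p^2 + 10759045248*a^2*k + 14437142640*a^2*p + 18189727872*a^3 + 49674816*p*k^3 + 216707616*p^2*k^2 + 149071104*p^3*k + 12911616*p^4 + 175218624*a*k^3 + 1999776384*a*p*k^2 + 3019996224*a*p^2*k + 699093504*a*p^3 + 3606690672*a^2*k^2 + 14311772832*a^2*p*k + 7387900224*a^2*p^2 + 17227055648*a^3*k + 23806149984*a^3*p + 21404673456*a^4 + 26954208*p^2*k^3 + 54183168*p^3*k^2 + 14487552*p^4*k + 229598352*a*p*k^3 + 1009799136*a*p^2*k^2 + 710850816*a*p^3*k + 63277056*a*p^4 + 390717744*a^2*k^3 + 4518267408*a^2*p*k^2 + 6942183264*a^2*p^2*k + 1650163968*a^2*p^3 + 5205223168*a^3*k^2 + 21170657600*a^3*p*k + 11205807168*a^3*p^2 + 18177760752*a^4*k + 26020482624*a^4*p + 17689553184*a^5 + 6656256*p^3*k^3 + 5197824*p^4*k^2 + 111884832*a*p^2*k^3 + 228393216*a*p^3*k^2 + 62931456*a*p^4*k + 462509088*a^2*p*k^3 + 2051013312*a^2*p^2*k^2 + 1479257856*a^2*p^3*k + 135541248*a^2*p^4 + 503359328*a^3*k^3 + 5932023840*a^3*p*k^2 + 9274613696*a^3*p^2*k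 + 2268036096*a^3*p^3 + 4874756832*a^4*k^2 + 20452886784*a^4*p*k + 11116916256*a^4*p^2 + 13256035936*a^5*k + 19799421184*a^5*p + 10512626912*a^6 + 635904*p^4*k^3 + 24579072*a*p^3*k^3 + 19671552*a*p^4*k^2 + 198261312*a^2*p^2*k^3 + 411326208*a^2*p^3*k^2 + 116971008*a^2*p^4*k + 531424240*a^3*p*k^3 + 2372819584*a^3*p^2*k^2 + 1754304000*a^3*p^3*k + 165725184*a^3*p^4 + 412579968*a^4*k^3 + 4995966288*a^4*p*k^2 + 7938190272*a^4*p^2*k + 2000100096*a^4*p^3 + 3091929344*a^5*k^2 + 13502184080*a^5*p*k + 7538613504*a^5*p^2 + 6807706240*a^6*k + 10712092976*a^6*p + 4519107328*a^7 + 2073600*a*p^4*k^3 + 37656576*a^2*p^3*k^3 + 30970368*a^2*p^4*k^2 + 194660864*a^3*p^2*k^3 + 410254848*a^3*p^3*k^2 + 120566784*a^3*p^4*k + 382504672*a^4*p*k^3 + 1712097920*a^4*p^2*k^2 + 1296603648*a^4*p^3*k + 126481920*a^4*p^4 + 222970304*a^5*k^3 + 2809275296*a^5*p*k^2 + 4517686144*a^5*p^2*k + 1173430272*a^5*p^3 + 1343481152*a^6*k^2 + 6187429920*a^6*p*k + 3540849408*a^6*p^2 + 2458332224*a^7*k + 4130935648*a^7*p + 1392072896*a^8 + 2700288*a^2*p^4*k^3 + 30631680*a^3*p^3*k^3 + 25962496*a^3*p^4*k^2 + 114718208*a^4*p^2*k^3 + 244732160*a^4*p^3*k^2 + 74406912*a^4*p^4*k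 + 178155328*a^5*p*k^3 + 791040768*a^5*p^2*k^2 + 611474688*a^5*p^3*k + 61681664*a^5*p^4 + 79409152*a^6*k^3 + 1063023040*a^6*p*k^2 + 1713041408*a^6*p^2*k + 457904896*a^6*p^3 + 394398464*a^7*k^2 + 1957179840*a^7*p*k + 1139239680*a^7*p^2 + 610768384*a^8*k + 1119571776*a^8*p + 299096832*a^9 + 1755136*a^3*p^4*k^3 + 13950464*a^4*p^3*k^3 + 12222464*a^4*p^4*k^2 + 40893952*a^5*p^2*k^3 + 87314944*a^5*p^3*k^2 + 27484160*a^5*p^4*k + 53487232*a^6*p*k^3 + 230064640*a^6*p^2*k^2 + 179659264*a^6*p^3*k + 18761728*a^6*p^4 + 17970432*a^7*k^3 + 265821056*a^7*p*k^2 + 419578368*a^7*p^2*k + 114576896*a^7*p^3 + 74788608*a^8*k^2 + 415964032*a^8*p*k + 241319424*a^8*p^2 + 99290880*a^9*k + 206284416*a^9*p + 42472704*a^10 + 569344*a^4*p^4*k^3 + 3372032*a^5*p^3*k^3 + 3063808*a^5*p^4*k^2 + 8356864*a^6*p^2*k^3 + 17251328*a^6*p^3*k^2 + 5623808*a^6*p^4*k + 9962496*a^7*p*k^3 + 39283712*a^7*p^2*k^2 + 30063616*a^7*p^3*k + 3252224*a^7*p^4 + 2347008*a^8*k^3 + 41831424*a^8*p*k^2 + 61238272*a^8*p^2*k + 16675840*a^8*p^3 + 8269824*a^9*k^2 + 56183808*a^9*p*k + 30802944*a^9*p^2 + 9498624*a^10*k + 24314880*a^10*p + 3575808*a^11 +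 73728*a^5*p^4*k^3 + 337920*a^6*p^3*k^3 + 319488*a^6*p^4*k^2 + 835584*a^7*p^2*k^3 + 1456128*a^7*p^3*k^2 + 491520*a^7*p^4*k + 1050624*a^8*p*k^3 + 3293184*a^8*p^2*k^2 + 2193408*a^8*p^3*k + 245760*a^8*p^4 + 135168*a^9*k^3 + 3741696*a^9*p*k^2 + 4374528*a^9*p^2*k + 1075200*a^9*p^3 + 405504*a^10*k^2 + 4331520*a^10*p*k + 1916928*a^10*p^2 + 405504*a^11*k + 1640448*a^11*p + 135168*a^12 + 24576*a^8*p^2*k^3 + 49152*a^9*p*k^3 + 73728*a^9*p^2*k^2 + 147456*a^10*p*k^2 + 73728*a^10*p^2*k + 147456*a^11*p*k + 24576*a^11*p^2 + 49152*a^12*p"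

definition q3 :: "real \<Rightarrow> real \<Rightarrow> real \<Rightarrow> real" where
  "q3 a p k = 356659200 + 435725568*k + 559861632*p + 2308200192*a + 173601792*k^2 + 661353984*p*k + 328924800*p^2 + 2614626432*a*k + 3419898624*a*p + 6788251008*a^2 + 22871808*k^3 + 253321344*p*k^2 + 377011584*p^2*k + 86303232*p^3 + 962447616*a*k^2 + 3709544256*a*p*k + 1879573248*a*p^2 + 7071743232*a^2*k + 9448259904*a^2*p + 11988066048*a^3 + 32389632*p*k^3 + 139065984*p^2*k^2 + 97003008*p^3*k + 8543232*p^4 + 116678016*a*k^3 + 1297334016*a*p*k^2 + 1953787392*a*p^2*k + 458320896*a*p^3 + 2382818688*a^2*k^2 + 9321844608*a^2*p*k + 4817401344*a^2*p^2 + 11373142272*a^3*k + 15584919936*a^3*p + 14148926464*a^4 + 17324928*p^2*k^3 + 34877952*p^3*k^2 + 9538560*p^4*k + 150648768*a*p*k^3 + 647409024*a*p^2*k^2 + 461638656*a*p^3*k + 41859072*a*p^4 + 262780416*a^2*k^3 + 2944914624*a^2*p*k^2 + 4484232576*a^2*p^2*k + 1079737344*a^2*p^3 + 3467730432*a^3*k^2 + 13828803072*a^3*p*k + 7292830464*a^3*p^2 + 12077440768*a^4*k + 17060556544*a^4*p + 11748828416*a^5 + 4271616*p^3*k^3 + 3400704*p^4*k^2 + 71985024*a*p^2*k^3 + 146714112*a*p^3*k^2 + 41444352*a*p^4*k + 306350208*a^2*p*k^3 + 1314717696*a^2*p^2*k^2 + 958625280*a^2*p^3*k + 89662464*a^2*p^4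 + 342878592*a^3*k^3 + 3895326336*a^3*p*k^2 + 5983720704*a^3*p^2*k + 1480897536*a^3*p^3 + 3283818368*a^4*k^2 + 13429152256*a^4*p*k + 7222291584*a^4*p^2 + 8887240064*a^5*k + 13026458624*a^5*p + 7033061248*a^6 + 414720*p^4*k^3 + 15745536*a*p^3*k^3 + 12883968*a*p^4*k^2 + 127878912*a^2*p^2*k^3 + 263678976*a^2*p^3*k^2 + 77082624*a^2*p^4*k + 356953152*a^3*p*k^3 + 1522432512*a^3*p^2*k^2 + 1134265344*a^3*p^3*k + 109658112*a^3*p^4 + 285638912*a^4*k^3 + 3318908096*a^4*p*k^2 + 5118952704*a^4*p^2*k + 1302923776*a^4*p^3 + 2113677056*a^5*k^2 + 8943516352*a^5*p*k + 4891065856*a^5*p^2 + 4622252800*a^6*k + 7094221376*a^6*p + 3056321792*a^7 + 1354752*a*p^4*k^3 + 24081408*a^2*p^3*k^3 + 20321280*a^2*p^4*k^2 + 126169344*a^3*p^2*k^3 + 262410240*a^3*p^3*k^2 + 79540224*a^3*p^4*k + 262306688*a^4*p*k^3 + 1101616896*a^4*p^2*k^2 + 836199424*a^4*p^3*k + 83740672*a^4*p^4 + 157581056*a^5*k^3 + 1899969152*a^5*p*k^2 + 2915639040*a^5*p^2*k + 762427392*a^5*p^3 + 936441088*a^6*k^2 + 4158426752*a^6*p*k + 2296361216*a^6*p^2 + 1698913536*a^7*k + 2768207744*a^7*p + 956651264*a^8 + 1769472*a^2*p^4*k^3 + 19550208*a^3*p^3*k^3 + 17080320*a^3*p^4*k^2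 + 75025920*a^4*p^2*k^3 + 156139520*a^4*p^3*k^2 + 49168384*a^4*p^4*k + 126018048*a^5*p*k^3 + 512197120*a^5*p^2*k^2 + 393199616*a^5*p^3*k + 40878080*a^5*p^4 + 57602048*a^6*k^3 + 739196416*a^6*p*k^2 + 1109404160*a^6*p^2*k + 296644608*a^6*p^3 + 282054656*a^7*k^2 + 1347273216*a^7*p*k + 739995136*a^7*p^2 + 432603136*a^8*k + 765904384*a^8*p + 210403328*a^9 + 1155072*a^3*p^4*k^3 + 8880128*a^4*p^3*k^3 + 8069120*a^4*p^4*k^2 + 27205632*a^5*p^2*k^3 + 55533568*a^5*p^3*k^2 + 18202624*a^5*p^4*k + 39642112*a^6*p*k^3 + 150968320*a^6*p^2*k^2 + 115130368*a^6*p^3*k + 12451840*a^6*p^4 + 13467648*a^7*k^3 + 193051648*a^7*p*k^2 + 274221056*a^7*p^2*k + 73973760*a^7*p^3 + 55324672*a^8*k^2 + 297915392*a^8*p*k + 157700096*a^8*p^2 + 72765440*a^9*k + 146308096*a^9*p + 30908416*a^10 + 376832*a^4*p^4*k^3 + 2138112*a^5*p^3*k^3 + 2031616*a^5*p^4*k^2 + 5758976*a^6*p^2*k^3 + 10928128*a^6*p^3*k^2 + 3735552*a^6*p^4*k + 7918592*a^7*p*k^3 + 26554368*a^7*p^2*k^2 + 19185664*a^7*p^3*k + 2162688*a^7*p^4 + 1830912*a^8*k^3 + 32521216*a^8*p*k^2 + 40951808*a^8*p^2*k + 10723328*a^8*p^3 + 6393856*a^9*k^2 + 42974208*a^9*p*k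 + 20484096*a^9*p^2 + 7294976*a^10*k + 18371584*a^10*p + 2732032*a^11 + 49152*a^5*p^4*k^3 + 212992*a^6*p^3*k^3 + 212992*a^6*p^4*k^2 + 626688*a^7*p^2*k^3 + 917504*a^7*p^3*k^2 + 327680*a^7*p^4*k + 923648*a^8*p*k^3 + 2404352*a^8*p^2*k^2 + 1392640*a^8*p^3*k + 163840*a^8*p^4 + 110592*a^9*k^3 + 3229696*a^9*p*k^2 + 3125248*a^9*p^2*k + 688128*a^9*p^3 + 331776*a^10*k^2 + 3688448*a^10*p*k + 1347584*a^10*p^2 + 331776*a^11*k + 1382400*a^11*p + 110592*a^12 + 24576*a^8*p^2*k^3 + 49152*a^9*p*k^3 + 73728*a^9*p^2*k^2 + 147456*a^10*p*k^2 + 73728*a^10*p^2*k + 147456*a^11*p*k + 24576*a^11*p^2 + 49152*a^12*p"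

definition q4 :: "real \<Rightarrow> real \<Rightarrow> real \<Rightarrow> real" where
  "q4 a p k = 87920640 + 106831872*k + 137687040*p + 568885248*a + 42467328*k^2 + 161326080*p*k + 80932608*p^2 + 641875968*a*k + 839863296*a*p + 1673782272*a^2 + 5640192*k^3 + 61378560*p*k^2 + 91881216*p^2*k + 21358080*p^3 + 236335104*a*k^2 + 904269312*a*p*k + 461293056*a*p^2 + 1740331008*a^2*k + 2317911552*a^2*p + 2959936512*a^3 + 7879680*p*k^3 + 33530112*p^2*k^2 + 23846400*p^3*k + 2135808*p^4 + 28975104*a*k^3 + 314717184*a*p*k^2 + 474667776*a*p^2*k + 113190912*a*p^3 + 588460032*a^2*k^2 + 2273121792*a^2*p*k + 1179028224*a^2*p^2 + 2810185728*a^3*k + 3822134784*a^3*p + 3502867456*a^4 + 4167936*p^2*k^3 + 8501760*p^3*k^2 + 2384640*p^4*k + 36813312*a*p*k^3 + 155561472*a*p^2*k^2 + 113149440*a*p^3*k + 10464768*a*p^4 + 65885184*a^2*k^3 + 716788224*a^2*p*k^2 + 1085971968*a^2*p^2*k + 266015232*a^2*p^3 + 863321088*a^3*k^2 + 3378656256*a^3*p*k + 1779641856*a^3*p^2 + 3002555392*a^4*k + 4187726848*a^4*p + 2921938944*a^5 + 1036800*p^3*k^3 + 850176*p^4*k^2 + 17273088*a*p^2*k^3 + 35610624*a*p^3*k^2 + 10361088*a*p^4*k + 75465216*a^2*p*k^3 + 314972928*a^2*p^2*k^2 + 234150912*a^2*p^3*k + 22415616*a^2*p^4 + 87057408*a^3*k^3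 + 954259968*a^3*p*k^2 + 1444737024*a^3*p^2*k + 363807744*a^3*p^3 + 826560512*a^4*k^2 + 3295596544*a^4*p*k + 1757234688*a^4*p^2 + 2229195776*a^5*k + 3206801408*a^5*p + 1761667072*a^6 + 103680*p^4*k^3 + 3801600*a*p^3*k^3 + 3220992*a*p^4*k^2 + 30647808*a^2*p^2*k^3 + 63687168*a^2*p^3*k^2 + 19270656*a^2*p^4*k + 89089536*a^3*p*k^3 + 364036608*a^3*p^2*k^2 + 275933184*a^3*p^3*k + 27414528*a^3*p^4 + 73699328*a^4*k^3 + 822049280*a^4*p*k^2 + 1232904192*a^4*p^2*k + 319009792*a^4*p^3 + 539823104*a^5*k^2 + 2213121536*a^5*p*k + 1186848768*a^5*p^2 + 1174005760*a^6*k + 1757297152*a^6*p + 773803008*a^7 + 338688*a*p^4*k^3 + 5778432*a^2*p^3*k^3 + 5080320*a^2*p^4*k^2 + 30279168*a^3*p^2*k^3 + 63022080*a^3*p^3*k^2 + 19885056*a^3*p^4*k + 66801152*a^4*p*k^3 + 263447040*a^4*p^2*k^2 + 202461184*a^4*p^3*k + 20935168*a^4*p^4 + 41478144*a^5*k^3 + 478947840*a^5*p*k^2 + 701445632*a^5*p^2*k + 185935872*a^5*p^3 + 243709952*a^6*k^2 + 1043831296*a^6*p*k + 556214784*a^6*p^2 + 438974464*a^7*k + 693681664*a^7*p + 245999616*a^8 + 442368*a^2*p^4*k^3 + 4657152*a^3*p^3*k^3 + 4270080*a^3*p^4*k^2 + 18117120*a^4*p^2*k^3 + 37253120*a^4*p^3*k^2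 + 12292096*a^4*p^4*k + 33063936*a^5*p*k^3 + 122996224*a^5*p^2*k^2 + 94674944*a^5*p^3*k + 10219520*a^5*p^4 + 15532032*a^6*k^3 + 191433728*a^6*p*k^2 + 267376128*a^6*p^2*k + 72007680*a^6*p^3 + 75177984*a^7*k^2 + 346180608*a^7*p*k + 179286528*a^7*p^2 + 114376704*a^8*k + 195838976*a^8*p + 55304192*a^9 + 288768*a^3*p^4*k^3 + 2097152*a^4*p^3*k^3 + 2017280*a^4*p^4*k^2 + 6672384*a^5*p^2*k^3 + 13148160*a^5*p^3*k^2 + 4550656*a^5*p^4*k + 10850304*a^6*p*k^3 + 36696064*a^6*p^2*k^2 + 27541504*a^6*p^3*k + 3112960*a^6*p^4 + 3735552*a^7*k^3 + 52031488*a^7*p*k^2 + 66625536*a^7*p^2*k + 17858560*a^7*p^3 + 15187968*a^8*k^2 + 79417344*a^8*p*k + 38404096*a^8*p^2 + 19824640*a^9*k + 38694912*a^9*p + 8372224*a^10 + 94208*a^4*p^4*k^3 + 499712*a^5*p^3*k^3 + 507904*a^5*p^4*k^2 + 1462272*a^6*p^2*k^3 + 2564096*a^6*p^3*k^2 + 933888*a^6*p^4*k + 2293760*a^7*p*k^3 + 6647808*a^7*p^2*k^2 + 4554752*a^7*p^3*k + 540672*a^7*p^4 + 524288*a^8*k^3 + 9273344*a^8*p*k^2 + 10178560*a^8*p^2*k + 2572288*a^8*p^3 + 1818624*a^9*k^2 + 12107776*a^9*p*k + 5074944*a^9*p^2 + 2064384*a^10*k + 5128192*a^10*p + 770048*a^11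 + 12288*a^5*p^4*k^3 + 49152*a^6*p^3*k^3 + 53248*a^6*p^4*k^2 + 172032*a^7*p^2*k^3 + 212992*a^7*p^3*k^2 + 81920*a^7*p^4*k + 286720*a^8*p*k^3 + 647168*a^8*p^2*k^2 + 327680*a^8*p^3*k + 40960*a^8*p^4 + 32768*a^9*k^3 + 991232*a^9*p*k^2 + 827392*a^9*p^2*k + 163840*a^9*p^3 + 98304*a^10*k^2 + 1122304*a^10*p*k + 352256*a^10*p^2 + 98304*a^11*k + 417792*a^11*p + 32768*a^12 + 8192*a^8*p^2*k^3 + 16384*a^9*p*k^3 + 24576*a^9*p^2*k^2 + 49152*a^10*p*k^2 + 24576*a^10*p^2*k + 49152*a^11*p*k + 8192*a^11*p^2 + 16384*a^12*p"

lemma bern: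
  "(5+4*p)^4 * Mh a p k W ((12 + 8*a)*V) =
     q0 a p k * (12*V + 12*p*V + 8*a*V + 8*a*p*V - W)^4
   + q1 a p k * (W - (7 + 8*p + 8*a + 8*a*p)*V) * (12*V + 12*p*V + 8*a*V + 8*a*p*V - W)^3
   + q2 a p k * (W - (7 + 8*p + 8*a + 8*a*p)*V)^2 * (12*V + 12*p*V + 8*a*V + 8*a*p*V - W)^2
   + q3 a p k * (W - (7 + 8*p + 8*a + 8*a*p)*V)^3 * (12*V + 12*p*V + 8*a*V + 8*a*p*V - W)
   + q4 a p k * (W - (7 + 8*p + 8*a + 8*a*p)*V)^4"
  unfolding Mh_def Let_def q0_def q1_def q2_def q3_def q4_def by algebra

lemma q_pos:
  assumes "0 \<le> a" "0 \<le> p" "0 \<le> k"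
  shows "0 < q0 a p k" "0 \<le> q1 a p k" "0 \<le> q2 a p k" "0 \<le> q3 a p k" "0 < q4 a p k"
  unfolding q0_def q1_def q2_def q3_def q4_def
  using assms by (intro add_pos_nonneg add_nonneg_nonneg mult_nonneg_nonneg zero_le_power; simp)+

lemma bern_pos:
  fixes s t c0 c1 c2 c3 c4 :: real
  assumes "0 \<le> s" "0 \<le> t" "0 < s + t" "0 < c0" "0 \<le> c1" "0 \<le> c2" "0 \<le> c3" "0 < c4"
  shows "0 < c0 * t^4 + c1 * s * t^3 + c2 * s^2 * t^2 + c3 * s^3 * t + c4 * s^4"
proof -
  have n: "0 \<le> c1 * s * t^3" "0 \<le> c2 * s^2 * t^2" "0 \<le> c3 * s^3 * t"
    using assms by auto
  show ?thesis
  proof (cases "t > 0")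
    case True
    then have "0 < c0 * t^4" using assms by simp
    moreover have "0 \<le> c4 * s^4" using assms by simp
    ultimately show ?thesis using n by linarith
  next
    case False
    then have "s > 0" using assms by simp
    then have "0 < c4 * s^4" using assms by simp
    moreover have "0 \<le> c0 * t^4" using assms by simp
    ultimately show ?thesis using n by linarith
  qed
qed

lemma core:
  fixes a p k x0 x1 x2 x3 :: real
  assumes a0: "0 \<le> a" and p0: "0 \<le> p" and k0: "0 \<le> k" and x1p: "0 < x1"
    and R1: "(1+a)*(2+a)*x2 = (1+a)*(2*(2+a+p)+1)*x1 - (p+2)*(3+2*a+p)*x0"
    and R2: "(2+a)*(3+a)*x3 = (2+a)*(2*(2+a+p)+1)*x2 - (p+1)*(4+2*a+p)*x1"
    and lo: "(7 + 8*p + 8*a + 8*a*p) * x1 \<le> (12+8*a)*((2+a)*x2)"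
    and hi: "(2+a)*x2 \<le> (p+1)*x1"
  shows "0 < x1^4*(2+a+k)^2*(3+a+k) - x1^2*x0*x2*(1+a+k)*(2+a+k)*(3+a+k)
             - x0^2*x2^2*(1+a+k)^2*(3+a+k) + x0^2*x1*x3*(1+a+k)^2*(2+a+k)"
    (is "0 < ?E")
proof -
  define Q0 where "Q0 = (p+2)*(3+2*a+p)"
  define y0 where "y0 = Q0 * x0"
  define y3 where "y3 = (2+a)*(3+a)*x3"
  define K where "K = 1+a+k"
  have stepa: "Q0^2*(2+a)^2*(3+a) * ?E =
      x1^4*(K+1)^2*(K+2)*Q0^2*(2+a)^2*(3+a) - x1^2*y0*x2*Q0*K*(K+1)*(K+2)*(2+a)^2*(3+a)
      - y0^2*x2^2*K^2*(K+2)*(2+a)^2*(3+a) + y0^2*x1*y3*K^2*(K+1)*(2+a)"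
    unfolding y0_def y3_def K_def by algebra
  have y0v: "y0 = (1+a)*(2*(2+a+p)+1)*x1 - (1+a)*(2+a)*x2"
    unfolding y0_def Q0_def using R1 by simp
  have y3v: "y3 = (2+a)*(2*(2+a+p)+1)*x2 - (p+1)*(4+2*a+p)*x1"
    unfolding y3_def using R2 by simp
  have stepc: "(12+8*a)^4 * (x1^4*(K+1)^2*(K+2)*Q0^2*(2+a)^2*(3+a) - x1^2*y0*x2*Q0*K*(K+1)*(K+2)*(2+a)^2*(3+a)
      - y0^2*x2^2*K^2*(K+2)*(2+a)^2*(3+a) + y0^2*x1*y3*K^2*(K+1)*(2+a))
      = Mh a p k ((12+8*a)*((2+a)*x2)) ((12+8*a)*x1)"
    unfolding y0v y3v Mh_def Let_def K_def Q0_def by algebra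
  define W where "W = (12+8*a)*((2+a)*x2)"
  have B: "(5+4*p)^4 * Mh a p k W ((12 + 8*a)*x1) =
     q0 a p k * (12*x1 + 12*p*x1 + 8*a*x1 + 8*a*p*x1 - W)^4
   + q1 a p k * (W - (7 + 8*p + 8*a + 8*a*p)*x1) * (12*x1 + 12*p*x1 + 8*a*x1 + 8*a*p*x1 - W)^3
   + q2 a p k * (W - (7 + 8*p + 8*a + 8*a*p)*x1)^2 * (12*x1 + 12*p*x1 + 8*a*x1 + 8*a*p*x1 - W)^2
   + q3 a p k * (W - (7 + 8*p + 8*a + 8*a*p)*x1)^3 * (12*x1 + 12*p*x1 + 8*a*x1 + 8*a*p*x1 - W)
   + q4 a p k * (W - (7 + 8*p + 8*a + 8*a*p)*x1)^4"
    by (rule bern)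
  define s where "s = W - (7 + 8*p + 8*a + 8*a*p)*x1"
  define t where "t = 12*x1 + 12*p*x1 + 8*a*x1 + 8*a*p*x1 - W"
  have s0: "0 \<le> s" unfolding s_def W_def using lo by simp
  have t0: "0 \<le> t"
  proof -
    have "(12+8*a)*((2+a)*x2) \<le> (12+8*a)*((p+1)*x1)" using hi a0 by (intro mult_left_mono) auto
    then show ?thesis unfolding t_def W_def by (simp add: algebra_simps)
  qed
  have st: "0 < s + t"
  proof -
    have "s + t = (5 + 4*p) * x1" unfolding s_def t_def by (simp add: algebra_simps)
    then show ?thesis using p0 x1p by simp
  qed
  have "0 < (5+4*p)^4 * Mh a p k W ((12 + 8*a)*x1)"
    unfolding B s_def[symmetric] t_def[symmetric]
    using bern_pos[OF s0 t0 st q_pos[OF a0 p0 k0]] by (simp add: mult.assoc)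
  then have M0: "0 < Mh a p k W ((12 + 8*a)*x1)"
    using p0 by (simp add: zero_less_mult_iff)
  have "0 < (12+8*a)^4 * (Q0^2*(2+a)^2*(3+a) * ?E)"
    using M0 stepa stepc unfolding W_def by simp
  then have "0 < Q0^2*(2+a)^2*(3+a) * ?E" using a0 by (simp add: zero_less_mult_iff)
  moreover have "0 < Q0^2*(2+a)^2*(3+a)" unfolding Q0_def using a0 p0 by simp
  ultimately show ?thesis by (simp add: zero_less_mult_iff)
qed

theorem theorem1p2:
  fixes k m i :: nat
  assumes "m \<ge> 2" and "1 \<le> i" and "i \<le> m - 1"
  shows "(boros_moll_norm i k m)^2 * ((boros_moll_norm i k m)^2
            - boros_moll_norm (i - 1) k m * boros_moll_norm (i + 1) k m)
       > (boros_moll_norm (i - 1) k m)^2 * ((boros_moll_norm (i + 1) k m)^2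
            - boros_moll_norm i k m * boros_moll_norm (i + 2) k m)"
proof -
  have im: "i + 1 \<le> m" using assms by simp
  define a where "a = real (i - 1)"
  define p where "p = real (m - i - 1)"
  define kk where "kk = real k"
  have ia: "real i = 1 + a" unfolding a_def using assms by (simp add: of_nat_diff)
  have mp: "real m = 2 + a + p" unfolding p_def using assms im ia by (simp add: of_nat_diff)
  have a0: "0 \<le> a" and p0: "0 \<le> p" and k0: "0 \<le> kk" unfolding a_def p_def kk_def by auto
  define x0 where "x0 = boros_moll (i-1) m"
  define x1 where "x1 = boros_moll i m"
  define x2 where "x2 = boros_moll (i+1) m"
  define x3 where "x3 = boros_moll (i+2) m"
  have x1p: "0 < x1" unfolding x1_def using assms by (intro bm_pos) simp
  have R1: "(1+a)*(2+a)*x2 = (1+a)*(2*(2+a+p)+1)*x1 - (p+2)*(3+2*a+p)*x0"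
  proof -
    have "real i * real (i+1) * x2 = real i * (2*real m+1) * x1 - (real m + 1 - real i) * (real m + real i) * x0"
      unfolding x0_def x1_def x2_def using bm_rec[OF assms(2)] im by simp
    then show ?thesis using ia mp by (simp add: algebra_simps)
  qed
  have R2: "(2+a)*(3+a)*x3 = (2+a)*(2*(2+a+p)+1)*x2 - (p+1)*(4+2*a+p)*x1"
  proof -
    have "real (i+1) * real (i+1+1) * boros_moll (i+1+1) m = real (i+1) * (2*real m+1) * boros_moll (i+1) m
        - (real m + 1 - real (i+1)) * (real m + real (i+1)) * boros_moll (i+1-1) m"
      using bm_rec[of "i+1" m] im by simp
    then have "real (i+1) * real (i+2) * x3 = real (i+1) * (2*real m+1) * x2
        - (real m + 1 - real (i+1)) * (real m + real (i+1)) * x1"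
      unfolding x1_def x2_def x3_def by (simp add: numeral_2_eq_2)
    then show ?thesis unfolding of_nat_add ia mp by (simp add: algebra_simps)
  qed
  have lo: "(7 + 8*p + 8*a + 8*a*p) * x1 \<le> (12+8*a)*((2+a)*x2)"
  proof -
    have l: "Rb m (i+1) * x1 \<le> real (i+1) * x2"
      unfolding x1_def x2_def using lower_bound[of "i+1" m] im by simp
    have T: "(12+8*a) * Rb m (i+1) = 7 + 8*p + 8*a + 8*a*p"
    proof -
      have d: "2 * real (i+1) - 1 = 3 + 2*a" unfolding of_nat_add ia by simp
      have d0: "3 + 2*a \<noteq> 0" using a0 by simp
      show ?thesis unfolding Rb_def d unfolding of_nat_add ia mp using d0
        by (simp add: field_simps)
    qed
    have ri: "real (i+1) = 2 + a" using ia by simp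
    have c1: "(12+8*a) * (Rb m (i+1) * x1) \<le> (12+8*a) * ((2 + a) * x2)"
      using l a0 unfolding ri by (intro mult_left_mono) auto
    have c2: "(12+8*a) * (Rb m (i+1) * x1) = (7 + 8*p + 8*a + 8*a*p) * x1"
      using T by (metis mult.assoc)
    show ?thesis using c1 c2 by linarith
  qed
  have hi: "(2+a)*x2 \<le> (p+1)*x1"
  proof -
    have "real (i+1) * x2 \<le> (real m + 1 - real (i+1)) * x1"
      unfolding x1_def x2_def using upper_bound[of "i+1" m] im by simp
    then show ?thesis unfolding of_nat_add ia mp by (simp add: algebra_simps)
  qed
  have Epos: "0 < x1^4*(2+a+kk)^2*(3+a+kk) - x1^2*x0*x2*(1+a+kk)*(2+a+kk)*(3+a+kk)
             - x0^2*x2^2*(1+a+kk)^2*(3+a+kk) + x0^2*x1*x3*(1+a+kk)^2*(2+a+kk)"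
    by (rule core[OF a0 p0 k0 x1p R1 R2 lo hi])
  define F where "F = (fact (i - 1 + k) :: real)"
  define K where "K = 1 + a + kk"
  have Fp: "F > 0" unfolding F_def by simp
  have Kp: "K > 0" unfolding K_def using a0 k0 by simp
  have K1: "real (i + k) = K" unfolding K_def kk_def using ia by simp
  have f1: "(fact (i + k) :: real) = K * F"
  proof -
    have "i + k = Suc (i - 1 + k)" using assms by simp
    then have "(fact (i + k) :: real) = real (i + k) * F" unfolding F_def by (metis fact_Suc of_nat_Suc)
    then show ?thesis using K1 by simp
  qed
  have f2: "(fact (i + 1 + k) :: real) = (K+1) * (K * F)"
  proof -
    have "(fact (i + 1 + k) :: real) = fact (Suc (i + k))" by simp
    also have "\<dots> = real (Suc (i+k)) * fact (i+k)" by (rule fact_Suc)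
    finally show ?thesis using f1 K1 by simp
  qed
  have f3: "(fact (i + 2 + k) :: real) = (K+2) * ((K+1) * (K * F))"
  proof -
    have "(fact (i + 2 + k) :: real) = fact (Suc (i + 1 + k))" by simp
    also have "\<dots> = real (Suc (i + 1 + k)) * fact (i + 1 + k)" by (rule fact_Suc)
    finally show ?thesis using f2 K1 by simp
  qed
  define A0 where "A0 = boros_moll_norm (i - 1) k m"
  define A1 where "A1 = boros_moll_norm i k m"
  define A2 where "A2 = boros_moll_norm (i + 1) k m"
  define A3 where "A3 = boros_moll_norm (i + 2) k m"
  have h0: "x0 = A0 * F" unfolding A0_def boros_moll_norm_def x0_def F_def by simp
  have h1: "x1 = A1 * (K * F)" unfolding A1_def boros_moll_norm_def x1_def f1[symmetric] by simp
  have h2: "x2 = A2 * ((K+1) * (K * F))" unfolding A2_def boros_moll_norm_def x2_def f2[symmetric] by simp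
  have h3: "x3 = A3 * ((K+2) * ((K+1) * (K * F)))" unfolding A3_def boros_moll_norm_def x3_def f3[symmetric] by simp
  have id: "x1^4*(2+a+kk)^2*(3+a+kk) - x1^2*x0*x2*(1+a+kk)*(2+a+kk)*(3+a+kk)
             - x0^2*x2^2*(1+a+kk)^2*(3+a+kk) + x0^2*x1*x3*(1+a+kk)^2*(2+a+kk)
      = (F^4 * K^4 * (K+1)^2 * (K+2)) * (A1^2 * (A1^2 - A0 * A2) - A0^2 * (A2^2 - A1 * A3))"
  proof -
    have e: "1+a+kk = K" "2+a+kk = K+1" "3+a+kk = K+2" unfolding K_def by simp_all
    show ?thesis unfolding e h0 h1 h2 h3 by algebra
  qed
  have Dp: "0 < F^4 * K^4 * (K+1)^2 * (K+2)" using Fp Kp by simp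
  have "0 < A1^2 * (A1^2 - A0 * A2) - A0^2 * (A2^2 - A1 * A3)"
    using Epos Dp unfolding id by (simp add: zero_less_mult_iff)
  then show ?thesis unfolding A0_def A1_def A2_def A3_def by simp
qed

end
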